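(* Let $G$ be a graph with $V(G)=[n]$, without isolated vertices, and let $I=[n]\setminus[n-i]$ be an independent set of $G$ (for some $i\ge 0$); write $\overline{S}=[n]\setminus S$. Order the facets of $\mathcal{NC}(G)$ by $\prec$ as defined in the context. If $\sigma,\sigma'\in\mathcal{NC}(G)$ satisfy $\overline{\sigma}\cap\overline{I}=\overline{\sigma'}\cap\overline{I}$ and the induced subgraph $G[\overline{\sigma}\cap\overline{I}]$ contains an edge, then $\mathrm{mes}_{\prec}(\sigma)=\mathrm{mes}_{\prec}(\sigma')$.
   Context: $\mathcal{NC}(G)$ is the simplicial complex on $V(G)$ whose faces are the sets $W\subseteq V(G)$ such that $V(G)\setminus W$ contains both endpoints of some edge. Its facets are exactly the sets $[n]\setminus\{a,b\}$ for edges $ab\in E(G)$. For edges $a_1b_1,a_2b_2$ with $a_j<b_j$, write $a_1b_1<_L a_2b_2$ if $b_1<b_2$, or $b_1=b_2$ and $a_1<a_2$. For distinct facets $\sigma,\tau$, set $\sigma\prec\tau$ iff $\overline{\sigma}<_L\overline{\tau}$; this gives a linear order $\sigma_1,\dots,\sigma_m$ of the facets. Minimal exclusion sequence: for a face $\sigma$, let $i$ be the smallest index with $\sigma\subseteq\sigma_i$. If $i=1$, $\mathrm{mes}_\prec(\sigma)$ is the empty sequence; otherwise $\mathrm{mes}_\prec(\sigma)=(v_1,\dots,v_{i-1})$ where $v_1=\min(\sigma\setminus\sigma_1)$ and for $2\le k\le i-1$, $v_k=\min(\{v_1,\dots,v_{k-1}\}\cap(\sigma\setminus\sigma_k))$ if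 this intersection is nonempty, and $v_k=\min(\sigma\setminus\sigma_k)$ otherwise (minima taken in the natural order of $[n]$). *)

theory Defs
  imports Main "HOL-Library.Product_Lexorder"
begin

definition simple_graph :: "nat \<Rightarrow> nat set set \<Rightarrow> bool" where
  "simple_graph n E \<longleftrightarrow> (\<forall>e\<in>E. e \<subseteq> {1..n} \<and> card e = 2)"

definition no_isolated :: "nat \<Rightarrow> nat set set \<Rightarrow> bool" where
  "no_isolated n E \<longleftrightarrow> (\<forall>v\<in>{1..n}. \<exists>e\<in>E. v \<in> e)"

definition independent :: "nat set set \<Rightarrow> nat set \<Rightarrow> bool" where
  "independent E S \<longleftrightarrow> \<not> (\<exists>e\<in>E. e \<subseteq> S)"

definition NC :: "nat \<Rightarrow> nat set set \<Rightarrow> nat set set" where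
  "NC n E = {W. W \<subseteq> {1..n} \<and> (\<exists>e\<in>E. e \<subseteq> {1..n} - W)}"

text \<open>Edges ab (a<b) encoded as (b,a); lexicographic order on these pairs is exactly <_L.\<close>
definition edge_keys :: "nat set set \<Rightarrow> (nat \<times> nat) list" where
  "edge_keys E = sorted_list_of_set {(b, a). a < b \<and> {a, b} \<in> E}"

definition facets_list :: "nat \<Rightarrow> nat set set \<Rightarrow> nat set list" where
  "facets_list n E = map (\<lambda>(b, a). {1..n} - {a, b}) (edge_keys E)"

fun mes_aux :: "nat set \<Rightarrow> nat set list \<Rightarrow> nat list \<Rightarrow> nat list" where
  "mes_aux \<sigma> [] vs = vs"
| "mes_aux \<sigma> (F # Fs) vs =
     (let C = set vs \<inter> (\<sigma> - F);
          v = (if C \<noteq> {} then Min C else Min (\<sigma> - F))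
      in mes_aux \<sigma> Fs (vs @ [v]))"

text \<open>Minimal exclusion sequence. With 0-based list index j of the first facet containing
  sigma (i.e. i = j+1), the sequence is (v_1,...,v_j) computed from facets sigma_1..sigma_j.\<close>
definition mes :: "nat \<Rightarrow> nat set set \<Rightarrow> nat set \<Rightarrow> nat list" where
  "mes n E \<sigma> =
     (let Fs = facets_list n E;
          j = (LEAST j. j < length Fs \<and> \<sigma> \<subseteq> Fs ! j)
      in mes_aux \<sigma> (take j Fs) [])"

end

theory Submission
  imports Defs
begin

lemma mes_aux_cong:
  assumes "\<forall>F\<in>set L. \<sigma> - F = \<sigma>' - F"
  shows "mes_aux \<sigma> L vs = mes_aux \<sigma>' L vs"
  using assms by (induction L arbitrary: vs) (auto simp: Let_def)

lemma Least_cong_le: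
  assumes "P (j0::nat)" "\<forall>k\<le>j0. P k = Q k"
  shows "Least P = Least Q"
proof -
  have le: "Least P \<le> j0" using assms(1) by (rule Least_le)
  have "P (Least P)" using assms(1) by (rule LeastI)
  hence "Q (Least P)" using assms(2) le by auto
  moreover have "\<And>k. Q k \<Longrightarrow> Least P \<le> k"
  proof -
    fix k assume "Q k"
    show "Least P \<le> k"
    proof (rule ccontr)
      assume "\<not> Least P \<le> k"
      hence "k < Least P" by simp
      hence "\<not> P k" by (rule not_less_Least)
      with \<open>Q k\<close> \<open>k < Least P\<close> le assms(2) show False by auto
    qed
  qed
  ultimately show ?thesis by (intro Least_equality[symmetric]) auto
qed

theorem claim2p2:
  fixes n i :: nat and E :: "nat set set" and \<sigma> \<sigma>' :: "nat set"
  assumes "simple_graph n E"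
    and "no_isolated n E"
    and "independent E ({1..n} - {1..n - i})"
    and "\<sigma> \<in> NC n E" and "\<sigma>' \<in> NC n E"
    and "({1..n} - \<sigma>) \<inter> ({1..n} - ({1..n} - {1..n - i}))
         = ({1..n} - \<sigma>') \<inter> ({1..n} - ({1..n} - {1..n - i}))"
    and "\<exists>e\<in>E. e \<subseteq> ({1..n} - \<sigma>) \<inter> ({1..n} - ({1..n} - {1..n - i}))"
  shows "mes n E \<sigma> = mes n E \<sigma>'"
proof -
  define J where "J = {1..n - i}"
  have JJ: "{1..n} - ({1..n} - {1..n - i}) = J" unfolding J_def by auto
  have s1: "\<sigma> \<subseteq> {1..n}" and s2: "\<sigma>' \<subseteq> {1..n}" using assms(4,5) by (auto simp: NC_def)
  have eqJ: "\<sigma> \<inter> J = \<sigma>' \<inter> J"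
  proof -
    have "({1..n} - \<sigma>) \<inter> J = ({1..n} - \<sigma>') \<inter> J" using assms(6) JJ by simp
    moreover have "J \<subseteq> {1..n}" unfolding J_def by auto
    ultimately show ?thesis using s1 s2 by blast
  qed
  have Esub: "\<And>e. e \<in> E \<Longrightarrow> e \<subseteq> {1..n} \<and> card e = 2" using assms(1) by (auto simp: simple_graph_def)
  define S where "S = {(b, a). a < b \<and> {a, b} \<in> E}"
  have finS: "finite S"
  proof -
    have "S \<subseteq> {1..n} \<times> {1..n}" unfolding S_def using Esub by auto
    thus ?thesis by (rule finite_subset) auto
  qed
  define K where "K = edge_keys E"
  have K: "K = sorted_list_of_set S" unfolding K_def edge_keys_def S_def by simp
  have setK: "set K = S" using K finS by simp
  have sortK: "sorted K" using K by simp
  define Fs where "Fs = facets_list n E"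
  have lenFs: "length Fs = length K" unfolding Fs_def facets_list_def K_def by simp
  have Fsk: "\<And>k. k < length K \<Longrightarrow> Fs ! k = {1..n} - {snd (K!k), fst (K!k)}"
    unfolding Fs_def facets_list_def K_def by (auto split: prod.splits)
  obtain e where e: "e \<in> E" "e \<subseteq> ({1..n} - \<sigma>) \<inter> J" using assms(7) JJ by auto
  have "card e = 2" using Esub e(1) by auto
  then obtain x y where xy: "e = {x, y}" "x \<noteq> y" by (auto simp: card_2_iff)
  obtain a b where ab: "e = {a, b}" "a < b"
  proof (cases "x < y")
    case True thus ?thesis using that xy by auto
  next
    case False thus ?thesis using that[of y x] xy by (auto simp: insert_commute)
  qed
  have "(b, a) \<in> set K" using setK ab e(1) unfolding S_def by auto
  then obtain j0 where j0: "j0 < length K" "K ! j0 = (b, a)" by (auto simp: in_set_conv_nth)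
  have bJ: "b \<le> n - i" using e(2) ab unfolding J_def by auto
  have good: "\<And>k. k \<le> j0 \<Longrightarrow> \<sigma> - Fs ! k = \<sigma>' - Fs ! k \<and> (\<sigma> \<subseteq> Fs ! k \<longleftrightarrow> \<sigma>' \<subseteq> Fs ! k)"
  proof -
    fix k assume k: "k \<le> j0"
    obtain b' a' where kk: "K ! k = (b', a')" by fastforce
    have kl: "k < length K" using k j0 by simp
    have "K ! k \<le> K ! j0" using sorted_nth_mono[OF sortK k j0(1)] .
    hence "b' \<le> b" using kk j0(2) by (auto simp: less_eq_prod_def)
    moreover have "(b', a') \<in> S" using kk kl setK nth_mem by metis
    ultimately have "a' < b'" "{a', b'} \<in> E" "b' \<le> n - i" using bJ unfolding S_def by auto
    hence sub: "{a', b'} \<subseteq> J" using Esub unfolding J_def by fastforce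
    have F: "Fs ! k = {1..n} - {a', b'}" using Fsk[OF kl] kk by simp
    have "\<sigma> \<inter> {a', b'} = \<sigma>' \<inter> {a', b'}" using eqJ sub by blast
    thus "\<sigma> - Fs ! k = \<sigma>' - Fs ! k \<and> (\<sigma> \<subseteq> Fs ! k \<longleftrightarrow> \<sigma>' \<subseteq> Fs ! k)"
      unfolding F using s1 s2 by blast
  qed
  have inj0: "\<sigma> \<subseteq> Fs ! j0"
  proof -
    have "Fs ! j0 = {1..n} - {a, b}" using Fsk[OF j0(1)] j0(2) by simp
    thus ?thesis using e(2) ab s1 by blast
  qed
  define P where "P = (\<lambda>j. j < length Fs \<and> \<sigma> \<subseteq> Fs ! j)"
  define Q where "Q = (\<lambda>j. j < length Fs \<and> \<sigma>' \<subseteq> Fs ! j)"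
  have PQ: "Least P = Least Q"
    apply (rule Least_cong_le[of P j0])
    using inj0 j0 lenFs good unfolding P_def Q_def by auto
  have LP: "Least P \<le> j0" using inj0 j0 lenFs unfolding P_def by (intro Least_le) auto
  have "\<forall>F\<in>set (take (Least P) Fs). \<sigma> - F = \<sigma>' - F"
  proof
    fix F assume "F \<in> set (take (Least P) Fs)"
    then obtain k where "k < length (take (Least P) Fs)" "F = take (Least P) Fs ! k"
      by (auto simp: in_set_conv_nth)
    hence "k < Least P" "F = Fs ! k" by auto
    thus "\<sigma> - F = \<sigma>' - F" using good LP by auto
  qed
  hence "mes_aux \<sigma> (take (Least P) Fs) [] = mes_aux \<sigma>' (take (Least P) Fs) []"
    by (rule mes_aux_cong)
  thus ?thesis unfolding mes_def Let_def Fs_def[symmetric] using PQ unfolding P_def Q_def by simp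
qed

end
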